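(* Let $p$ be an odd prime. If $A,B\subseteq\mathbb{F}_p$ satisfy $A+B=P_p$ and $|A|=|B|$, then $$\sqrt{\varphi(p-1)}\le |A|<\sqrt{p}.$$
   Context: $\mathbb{F}_p$ is the finite field with $p$ elements. $P_p$ denotes the set of primitive elements of $\mathbb{F}_p$, i.e. the generators of the cyclic group $\mathbb{F}_p^{\times}$. For $A,B\subseteq\mathbb{F}_p$, $A+B=\{a+b: a\in A,\ b\in B\}$. $\varphi$ is Euler's totient function. *)

theory Defs
  imports "HOL-Number_Theory.Number_Theory"
begin

text \<open>Elements of F_p are represented by their canonical residues in {0..<p}.\<close>

definition primitive_elements :: "nat \<Rightarrow> nat set" where
  "primitive_elements p = {g \<in> {0..<p}. residue_primroot p g}"

definition sumset_mod :: "nat \<Rightarrow> nat set \<Rightarrow> nat set \<Rightarrow> nat set" where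
  "sumset_mod p A B = {(a + b) mod p | a b. a \<in> A \<and> b \<in> B}"

end

theory Submission imports Defs begin

lemma leg_vals: "Legendre a p = -1 \<or> Legendre a p = 0 \<or> Legendre a p = 1"
  by (auto simp: Legendre_def)

lemma small_cong_eq:
  fixes x y :: int and p :: nat
  assumes "2 < p" "\<bar>x\<bar> \<le> 1" "\<bar>y\<bar> \<le> 1" "[x = y] (mod int p)"
  shows "x = y"
proof -
  from assms(4) obtain k where k: "y - x = int p * k" by (metis cong_iff_dvd_diff cong_sym dvd_def)
  show ?thesis
  proof (cases "k = 0")
    case True then show ?thesis using k by simp
  next
    case False
    then have "\<bar>int p * k\<bar> \<ge> int p" by (simp add: abs_mult) (metis abs_ge_zero mult_le_cancel_left1 abs_of_nat not_less zabs_less_one_iff)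
    then show ?thesis using k assms by linarith
  qed
qed

lemma leg_abs: "\<bar>Legendre a p\<bar> \<le> 1"
  using leg_vals[of a p] by auto

lemma leg_mult:
  assumes "prime p" "2 < p"
  shows "Legendre (a*b) (int p) = Legendre a (int p) * Legendre b (int p)"
proof -
  have 1: "[Legendre (a*b) (int p) = (a*b) ^ ((p - 1) div 2)] (mod int p)"
    using euler_criterion assms by blast
  have "[Legendre a (int p) * Legendre b (int p) = a ^ ((p - 1) div 2) * b ^ ((p - 1) div 2)] (mod int p)"
    using euler_criterion[OF assms] by (intro cong_mult) auto
  then have "[Legendre (a*b) (int p) = Legendre a (int p) * Legendre b (int p)] (mod int p)"
    using 1 by (metis cong_sym cong_trans power_mult_distrib)
  moreover have "\<bar>Legendre a (int p) * Legendre b (int p)\<bar> \<le> 1"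
    using leg_abs[of a "int p"] leg_abs[of b "int p"] by (simp add: abs_mult mult_le_one)
  ultimately show ?thesis using small_cong_eq[OF assms(2)] leg_abs by blast
qed

lemma leg_mod: "Legendre (a mod p) p = Legendre a p"
  by (simp add: Legendre_def QuadRes_def cong_def)

lemma leg_zero_iff: "Legendre a p = 0 \<longleftrightarrow> p dvd a"
  by (auto simp: Legendre_def cong_0_iff)

lemma leg_sq: "\<not> p dvd a \<Longrightarrow> Legendre a p * Legendre a p = 1"
  by (auto simp: Legendre_def cong_0_iff)

lemma leg_pow:
  assumes "prime p" "2 < p"
  shows "Legendre (a^n) (int p) = Legendre a (int p) ^ n"
proof (induction n)
  case 0
  have "QuadRes (int p) 1" unfolding QuadRes_def by (rule exI[of _ 1]) simp
  moreover have "\<not> [1 = 0] (mod int p)" using assms prime_gt_1_nat by (auto simp: cong_def)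
  ultimately show ?case by (simp add: Legendre_def)
next
  case (Suc n) then show ?case by (simp add: leg_mult[OF assms])
qed


lemma leg_primroot:
  assumes "prime p" "odd p" "residue_primroot p g"
  shows "Legendre (int g) (int p) = -1"
proof -
  have p2: "2 < p" using assms(1,2) prime_ge_2_nat[OF assms(1)] by (metis dvd_refl le_neq_implies_less)
  have cop: "coprime p g" and ord: "ord p g = p - 1"
    using assms(3) totient_prime[OF assms(1)] by (auto simp: residue_primroot_def)
  have ndvd: "\<not> int p dvd int g"
    using cop assms(1) by (metis coprime_absorb_left int_dvd_int_iff not_prime_unit prime_nat_iff)
  show ?thesis
  proof (rule ccontr)
    assume "Legendre (int g) (int p) \<noteq> -1"
    then have "Legendre (int g) (int p) = 1" using leg_vals[of "int g" "int p"] ndvd leg_zero_iff by metis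
    then have "[1 = int g ^ ((p - 1) div 2)] (mod int p)" using euler_criterion[OF assms(1) p2, of "int g"] by simp
    then have "[g ^ ((p - 1) div 2) = 1] (mod p)"
      by (metis cong_int_iff cong_sym of_nat_1 of_nat_power)
    then have "(p - 1) dvd ((p - 1) div 2)" using ord ord_divides by metis
    moreover have "0 < (p - 1) div 2" using p2 by simp
    ultimately have "p - 1 \<le> (p - 1) div 2" by (simp add: dvd_imp_le)
    then show False using p2 by simp
  qed
qed

lemma leg_sum_zero:
  assumes "prime p" "2 < p" "Legendre (int g) (int p) = -1"
  shows "(\<Sum>z\<in>{0..<p}. Legendre (int z) (int p)) = 0"
proof -
  define h where "h z = (g * z) mod p" for z
  have ndvd: "\<not> p dvd g" using assms(3) leg_zero_iff[of "int g" "int p"] by auto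
  have cop: "coprime g p" using ndvd assms(1) by (metis coprime_commute prime_imp_coprime)
  have inj: "inj_on h {0..<p}"
  proof (rule inj_onI)
    fix x y assume "x \<in> {0..<p}" "y \<in> {0..<p}" "h x = h y"
    then have "[g * x = g * y] (mod p)" by (simp add: h_def cong_def)
    then have "[x = y] (mod p)" using cop cong_mult_lcancel_nat by blast
    then show "x = y" using \<open>x \<in> _\<close> \<open>y \<in> _\<close> cong_less_modulus_unique_nat by auto
  qed
  have sub: "h ` {0..<p} \<subseteq> {0..<p}" using assms(1) prime_gt_0_nat by (auto simp: h_def)
  have img: "h ` {0..<p} = {0..<p}"
    by (rule card_subset_eq) (use sub inj card_image[OF inj] in auto)
  have "(\<Sum>z\<in>{0..<p}. Legendre (int z) (int p)) = (\<Sum>z\<in>h ` {0..<p}. Legendre (int z) (int p))"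
    using img by simp
  also have "\<dots> = (\<Sum>z\<in>{0..<p}. Legendre (int (h z)) (int p))"
    using inj by (simp add: sum.reindex)
  also have "\<dots> = (\<Sum>z\<in>{0..<p}. - Legendre (int z) (int p))"
  proof (rule sum.cong)
    fix z
    have "Legendre (int (h z)) (int p) = Legendre (int g * int z) (int p)"
      by (simp add: h_def of_nat_mod leg_mod)
    also have "\<dots> = - Legendre (int z) (int p)" using leg_mult[OF assms(1,2)] assms(3) by simp
    finally show "Legendre (int (h z)) (int p) = - Legendre (int z) (int p)" .
  qed simp
  finally show ?thesis by (simp add: sum_negf)
qed


lemma int_dvd_small:
  fixes d :: int assumes "int p dvd d" "\<bar>d\<bar> < int p" shows "d = 0"
proof (rule ccontr)
  assume "d \<noteq> 0"
  then have "\<bar>int p\<bar> \<le> \<bar>d\<bar>" using dvd_imp_le_int assms(1) by blast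
  then show False using assms(2) by simp
qed

lemma dvd_shift_iff:
  assumes "0 < p" "x < p" "c < (p::nat)"
  shows "p dvd (x + c) \<longleftrightarrow> x = (p - c) mod p"
proof (cases "c = 0")
  case True
  then show ?thesis using assms by (auto dest: dvd_imp_le)
next
  case False
  then have r: "(p - c) mod p = p - c" using assms by simp
  show ?thesis
  proof
    assume "p dvd x + c"
    then obtain k where k: "x + c = p * k" by auto
    have "p * k < p * 2" using k assms by linarith
    then have "k < 2" by simp
    moreover have "k \<noteq> 0" using k False by (metis add_is_0 mult_0_right)
    ultimately have "k = 1" by linarith
    then show "x = (p - c) mod p" using k r by simp
  next
    assume "x = (p - c) mod p"
    then show "p dvd x + c" using r assms by simp
  qed
qed

lemma leg_pow_odd:
  assumes "prime p" "2 < p" "odd p" "\<not> int p dvd a"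
  shows "Legendre a (int p) ^ (p - 2) = Legendre a (int p)"
proof -
  obtain q where q: "p = 2 * q + 1" using assms(3) oddE by blast
  define m where "m = q - 1"
  have m: "p - 2 = Suc (2 * m)" using q assms(2) unfolding m_def by simp
  have "Legendre a (int p) ^ (p - 2) = Legendre a (int p) * (Legendre a (int p) * Legendre a (int p)) ^ m"
    by (simp add: m power_mult power2_eq_square)
  then show ?thesis using leg_sq[OF assms(4)] by simp
qed


lemma leg_pair_sum:
  assumes p: "prime p" "2 < p" "odd p"
    and zero: "(\<Sum>z\<in>{0..<p}. Legendre (int z) (int p)) = 0"
    and bc: "b < p" "c < p" "b \<noteq> c"
  shows "(\<Sum>x\<in>{0..<p}. Legendre (int (x+b)) (int p) * Legendre (int (x+c)) (int p)) = -1"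
proof -
  define chi where "chi z = Legendre (int z) (int p)" for z
  define r where "r = (p - c) mod p"
  define S where "S = {0..<p} - {r}"
  define T where "T = {0..<p} - {1::nat}"
  define h where "h x = ((x + b) * (x + c) ^ (p - 2)) mod p" for x
  have p0: "0 < p" using p(2) by simp
  have r: "r \<in> {0..<p}" using p0 by (simp add: r_def)
  have Sdvd: "\<not> p dvd (x + c)" if "x \<in> S" for x
    using that dvd_shift_iff[OF p0 _ bc(2), of x] by (auto simp: S_def r_def)
  have chi_mod: "chi (n mod p) = chi n" for n
    unfolding chi_def by (simp add: of_nat_mod leg_mod)
  have hval: "chi (h x) = chi (x + b) * chi (x + c)" if "x \<in> S" for x
  proof -
    have "chi (h x) = chi (x + b) * chi (x + c) ^ (p - 2)"
      unfolding h_def chi_mod by (simp add: chi_def leg_mult[OF p(1,2)] leg_pow[OF p(1,2)])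
    also have "chi (x + c) ^ (p - 2) = chi (x + c)"
      unfolding chi_def using leg_pow_odd[OF p, of "int (x + c)"] Sdvd[OF that]
      by (metis int_dvd_int_iff)
    finally show ?thesis .
  qed
  have ferm: "[(x + c) ^ (p - 2) * (x + c) = 1] (mod p)" if "x \<in> S" for x
  proof -
    have "(x + c) ^ (p - 2) * (x + c) = (x + c) ^ (p - 1)"
      using p(2) by (metis Suc_diff_Suc Suc_1 diff_Suc_1 less_trans_Suc numeral_2_eq_2 power_Suc2 zero_less_Suc)
    then show ?thesis using fermat_theorem[OF p(1) Sdvd[OF that]] by simp
  qed
  have inj: "inj_on h S"
  proof (rule inj_onI)
    fix x y assume x: "x \<in> S" and y: "y \<in> S" and hxy: "h x = h y"
    have c1: "[(x + b) * (x + c) ^ (p - 2) = (y + b) * (y + c) ^ (p - 2)] (mod p)"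
      using hxy by (simp add: h_def cong_def)
    have "[(x + b) * (x + c) ^ (p - 2) * ((x + c) * (y + c)) = (y + b) * (y + c) ^ (p - 2) * ((x + c) * (y + c))] (mod p)"
      using c1 by (rule cong_scalar_right)
    moreover have "(x + b) * (x + c) ^ (p - 2) * ((x + c) * (y + c)) = ((x + c) ^ (p - 2) * (x + c)) * ((x + b) * (y + c))"
      by (simp add: ac_simps)
    moreover have "(y + b) * (y + c) ^ (p - 2) * ((x + c) * (y + c)) = ((y + c) ^ (p - 2) * (y + c)) * ((y + b) * (x + c))"
      by (simp add: ac_simps)
    moreover have "[((x + c) ^ (p - 2) * (x + c)) * ((x + b) * (y + c)) = 1 * ((x + b) * (y + c))] (mod p)"
      using ferm[OF x] by (rule cong_scalar_right)
    moreover have "[((y + c) ^ (p - 2) * (y + c)) * ((y + b) * (x + c)) = 1 * ((y + b) * (x + c))] (mod p)"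
      using ferm[OF y] by (rule cong_scalar_right)
    ultimately have "[(x + b) * (y + c) = (y + b) * (x + c)] (mod p)"
      by (metis cong_sym cong_trans mult_1)
    then have "[int ((x + b) * (y + c)) = int ((y + b) * (x + c))] (mod int p)"
      by (simp only: cong_int_iff)
    then have "int p dvd (int x - int y) * (int c - int b)"
      unfolding cong_iff_dvd_diff by (simp add: algebra_simps)
    then have "int p dvd (int x - int y) \<or> int p dvd (int c - int b)"
      using p(1) by (simp add: prime_dvd_mult_iff)
    moreover have "\<bar>int x - int y\<bar> < int p" "\<bar>int c - int b\<bar> < int p"
      using x y bc by (auto simp: S_def)
    ultimately have "int x - int y = 0 \<or> int c - int b = 0" using int_dvd_small by blast
    then show "x = y" using bc by auto
  qed
  have sub: "h ` S \<subseteq> T"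
  proof
    fix z assume "z \<in> h ` S"
    then obtain x where x: "x \<in> S" and z: "z = h x" by auto
    have "z < p" using p0 by (simp add: z h_def)
    moreover have "z \<noteq> 1"
    proof
      assume "z = 1"
      then have "[(x + b) * (x + c) ^ (p - 2) = 1] (mod p)" using p(2) by (simp add: z h_def cong_def)
      then have "[(x + b) * (x + c) ^ (p - 2) * (x + c) = 1 * (x + c)] (mod p)"
        by (rule cong_scalar_right)
      moreover have "[(x + b) * ((x + c) ^ (p - 2) * (x + c)) = (x + b) * 1] (mod p)"
        using ferm[OF x] by (rule cong_scalar_left)
      ultimately have "[x + b = x + c] (mod p)"
        by (metis cong_sym cong_trans mult_1 mult.assoc mult_1_right)
      then have "[b = c] (mod p)" by (simp add: cong_add_lcancel_nat)
      then show False using bc cong_less_modulus_unique_nat by blast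
    qed
    ultimately show "z \<in> T" by (simp add: T_def)
  qed
  have cardS: "card S = p - 1" using r by (simp add: S_def)
  have cardT: "card T = p - 1" using p(2) by (simp add: T_def)
  have img: "h ` S = T"
    by (rule card_subset_eq) (use sub card_image[OF inj] cardS cardT in \<open>auto simp: T_def\<close>)
  have "(\<Sum>x\<in>{0..<p}. chi (x+b) * chi (x+c)) = chi (r+b) * chi (r+c) + (\<Sum>x\<in>S. chi (x+b) * chi (x+c))"
    using r by (simp add: S_def sum.remove)
  also have "chi (r+c) = 0"
  proof -
    have "p dvd (r + c)" using dvd_shift_iff[OF p0 _ bc(2), of r] r by (simp add: r_def)
    then have "int p dvd int (r + c)" by (simp only: int_dvd_int_iff)
    then show ?thesis by (simp only: chi_def leg_zero_iff)
  qed
  also have "(\<Sum>x\<in>S. chi (x+b) * chi (x+c)) = (\<Sum>x\<in>S. chi (h x))"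
    using hval by simp
  also have "\<dots> = (\<Sum>z\<in>h ` S. chi z)" using inj by (simp add: sum.reindex)
  also have "\<dots> = (\<Sum>z\<in>T. chi z)" using img by simp
  also have "\<dots> = (\<Sum>z\<in>{0..<p}. chi z) - chi 1"
    using p(2) by (simp add: T_def sum_diff1)
  also have "chi 1 = 1"
  proof -
    have "QuadRes (int p) 1" unfolding QuadRes_def by (rule exI[of _ 1]) simp
    moreover have "\<not> [1 = 0] (mod int p)" using p(2) by (auto simp: cong_def)
    ultimately show ?thesis by (simp add: chi_def Legendre_def)
  qed
  finally show ?thesis using zero by (simp add: chi_def)
qed


lemma leg_sq_sum:
  assumes p: "prime p" "2 < p" and b: "b < p"
  shows "(\<Sum>x\<in>{0..<p}. Legendre (int (x+b)) (int p) * Legendre (int (x+b)) (int p)) = int p - 1"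
proof -
  define r where "r = (p - b) mod p"
  have p0: "0 < p" using p(2) by simp
  have r: "r \<in> {0..<p}" using p0 by (simp add: r_def)
  have "(\<Sum>x\<in>{0..<p}. Legendre (int (x+b)) (int p) * Legendre (int (x+b)) (int p))
     = Legendre (int (r+b)) (int p) * Legendre (int (r+b)) (int p) + (\<Sum>x\<in>{0..<p}-{r}. Legendre (int (x+b)) (int p) * Legendre (int (x+b)) (int p))"
    using r by (simp add: sum.remove)
  also have "Legendre (int (r+b)) (int p) = 0"
  proof -
    have "p dvd (r + b)" using dvd_shift_iff[OF p0 _ b, of r] r by (simp add: r_def)
    then have "int p dvd int (r + b)" by (simp only: int_dvd_int_iff)
    then show ?thesis by (simp only: leg_zero_iff)
  qed
  also have "(\<Sum>x\<in>{0..<p}-{r}. Legendre (int (x+b)) (int p) * Legendre (int (x+b)) (int p)) = (\<Sum>x\<in>{0..<p}-{r}. 1)"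
  proof (rule sum.cong)
    fix x assume x: "x \<in> {0..<p}-{r}"
    then have "\<not> p dvd (x + b)" using dvd_shift_iff[OF p0 _ b, of x] by (auto simp: r_def)
    then have "\<not> int p dvd int (x + b)" by (metis int_dvd_int_iff)
    then show "Legendre (int (x+b)) (int p) * Legendre (int (x+b)) (int p) = 1" by (rule leg_sq)
  qed simp
  also have "(\<Sum>x\<in>{0..<p}-{r}. (1::int)) = int p - 1" using r p0 by (simp add: of_nat_diff)
  finally show ?thesis by simp
qed

lemma card_prim: assumes "prime p" "2 < p"
  shows "card (primitive_elements p) = totient (p - 1)"
proof -
  have eq: "residue_primroot p x \<longleftrightarrow> ord p x = p - 1" for x
  proof
    assume "residue_primroot p x" then show "ord p x = p - 1"
      using totient_prime[OF assms(1)] by (auto simp: residue_primroot_def)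
  next
    assume o: "ord p x = p - 1"
    then have "coprime p x" using assms(2) ord_eq_0[of p x] by auto
    then show "residue_primroot p x"
      using o totient_prime[OF assms(1)] assms(2) by (auto simp: residue_primroot_def)
  qed
  have "primitive_elements p = {x\<in>{..<p}. ord p x = p - 1}"
    unfolding primitive_elements_def using eq by auto
  then show ?thesis using prime_card_primitive_roots(2)[of p] assms by simp
qed

theorem theorem1p3:
  fixes p :: nat and A B :: "nat set"
  assumes "prime p" and "odd p"
    and "A \<subseteq> {0..<p}" and "B \<subseteq> {0..<p}"
    and "sumset_mod p A B = primitive_elements p"
    and "card A = card B"
  shows "sqrt (real (totient (p - 1))) \<le> real (card A) \<and> real (card A) < sqrt (real p)"
proof -
  have p2: "2 < p" using assms(1,2) prime_ge_2_nat[OF assms(1)] by (metis dvd_refl le_neq_implies_less)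
  have finA: "finite A" and finB: "finite B" using assms(3,4) finite_subset by auto
  define k where "k = card A"
  have cB: "card B = k" using assms(6) k_def by simp
  have ss: "sumset_mod p A B = (\<lambda>(a,b). (a + b) mod p) ` (A \<times> B)"
    by (auto simp: sumset_mod_def)
  have "totient (p - 1) = card (sumset_mod p A B)" using assms(5) card_prim[OF assms(1) p2] by simp
  also have "\<dots> \<le> card (A \<times> B)" unfolding ss using finA finB by (intro card_image_le) auto
  also have "\<dots> = k * k" using cB k_def by (simp add: card_cartesian_product)
  finally have low: "totient (p - 1) \<le> k * k" .
  have lower: "sqrt (real (totient (p - 1))) \<le> real k"
    by (rule real_le_lsqrt) (use low in \<open>auto simp: power2_eq_square simp flip: of_nat_mult\<close>)
  have upper: "k * k < p"
  proof (cases "k = 0")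
    case True then show ?thesis using p2 by simp
  next
    case False
    then have kpos: "0 < k" by simp
    define chi where "chi z = Legendre (int z) (int p)" for z
    have chi_mod: "chi (n mod p) = chi n" for n
      unfolding chi_def by (simp add: of_nat_mod leg_mod)
    have AB: "chi (a + b) = -1" if "a \<in> A" "b \<in> B" for a b
    proof -
      have "(a + b) mod p \<in> primitive_elements p" using that assms(5) by (auto simp: sumset_mod_def)
      then have "residue_primroot p ((a + b) mod p)" by (simp add: primitive_elements_def)
      then have "chi ((a + b) mod p) = -1" unfolding chi_def using leg_primroot[OF assms(1,2)] by blast
      then show ?thesis by (simp add: chi_mod)
    qed
    obtain a0 where a0: "a0 \<in> A" using kpos k_def by (metis card.empty ex_in_conv less_irrefl)
    obtain b0 where b0: "b0 \<in> B" using kpos cB by (metis card.empty ex_in_conv less_irrefl)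
    have zero: "(\<Sum>z\<in>{0..<p}. Legendre (int z) (int p)) = 0"
      using leg_sum_zero[OF assms(1) p2, of "a0 + b0"] AB[OF a0 b0] by (simp add: chi_def)
    define f where "f x = (\<Sum>b\<in>B. chi (x + b))" for x
    have G: "(\<Sum>x\<in>{0..<p}. chi (x+b) * chi (x+c)) = (if b = c then int p - 1 else -1)"
      if "b \<in> B" "c \<in> B" for b c
    proof -
      have "b < p" "c < p" using that assms(4) by auto
      then show ?thesis using leg_sq_sum[OF assms(1) p2, of b] leg_pair_sum[OF assms(1) p2 assms(2) zero, of b c]
        unfolding chi_def by (cases "b = c") simp_all
    qed
    have "(\<Sum>x\<in>{0..<p}. f x * f x) = (\<Sum>x\<in>{0..<p}. \<Sum>b\<in>B. \<Sum>c\<in>B. chi (x+b) * chi (x+c))"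
      by (simp add: f_def sum_product)
    also have "\<dots> = (\<Sum>b\<in>B. \<Sum>x\<in>{0..<p}. \<Sum>c\<in>B. chi (x+b) * chi (x+c))"
      by (rule sum.swap)
    also have "\<dots> = (\<Sum>b\<in>B. \<Sum>c\<in>B. \<Sum>x\<in>{0..<p}. chi (x+b) * chi (x+c))"
      by (rule sum.cong[OF refl], rule sum.swap)
    also have "\<dots> = (\<Sum>b\<in>B. \<Sum>c\<in>B. (if b = c then int p - 1 else -1))"
      using G by simp
    also have "\<dots> = (\<Sum>b\<in>B. int p - int k)"
    proof (rule sum.cong[OF refl])
      fix b assume b: "b \<in> B"
      have "(\<Sum>c\<in>B. (if b = c then int p - 1 else -1)) = (int p - 1) + (\<Sum>c\<in>B-{b}. (if b = c then int p - 1 else -1))"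
        using b finB by (simp add: sum.remove)
      also have "(\<Sum>c\<in>B-{b}. (if b = c then int p - 1 else -1)) = (\<Sum>c\<in>B-{b}. (-1::int))"
        by (rule sum.cong) auto
      also have "\<dots> = - int (k - 1)" using b finB cB by simp
      finally show "(\<Sum>c\<in>B. (if b = c then int p - 1 else -1)) = int p - int k"
        using kpos by (simp add: of_nat_diff)
    qed
    also have "\<dots> = int k * (int p - int k)" using cB by simp
    finally have tot: "(\<Sum>x\<in>{0..<p}. f x * f x) = int k * (int p - int k)" .
    have "(\<Sum>a\<in>A. f a * f a) = (\<Sum>a\<in>A. int k * int k)"
    proof (rule sum.cong[OF refl])
      fix a assume a: "a \<in> A"
      have "f a = (\<Sum>b\<in>B. -1)" unfolding f_def using AB[OF a] by simp
      then have "f a = - int k" using cB by simp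
      then show "f a * f a = int k * int k" by simp
    qed
    also have "\<dots> = int k * (int k * int k)" using k_def by simp
    finally have onA: "(\<Sum>a\<in>A. f a * f a) = int k * (int k * int k)" .
    have "(\<Sum>a\<in>A. f a * f a) \<le> (\<Sum>x\<in>{0..<p}. f x * f x)"
      by (rule sum_mono2) (use assms(3) in auto)
    then have "int k * (int k * int k) \<le> int k * (int p - int k)" using onA tot by simp
    then have "int k * int k \<le> int p - int k" using kpos by simp
    then have "int (k * k) < int p" using kpos by simp
    then show ?thesis by linarith
  qed
  have "real k < sqrt (real p)"
    by (rule real_less_rsqrt) (use upper in \<open>simp add: power2_eq_square flip: of_nat_mult\<close>)
  then show ?thesis using lower k_def by simp
qed

end
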